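(* In the algebra $\mathcal O_q$ defined in the context, for all $n\in\mathbb N$: $$\mathcal W_{-n}=-(q-q^{-1})^{-1}\sum_{k=0}^n\sum_{\ell=0}^k\binom{k}{\ell}q^{k-2\ell}[2]_q^{-k-2}B_{(k-2\ell)\delta+\alpha_0}\tilde{\mathcal G}_{n-k},$$ $$\mathcal W_{n+1}=-(q-q^{-1})^{-1}\sum_{k=0}^n\sum_{\ell=0}^k\binom{k}{\ell}q^{2\ell-k}[2]_q^{-k-2}B_{(k-2\ell)\delta+\alpha_1}\tilde{\mathcal G}_{n-k}.$$
   Context: All algebras are associative and unital over a field $\mathbb F$; $q\in\mathbb F$ is nonzero and not a root of unity; $[n]_q=(q^n-q^{-n})/(q-q^{-1})$. For elements $X,Y$ of an algebra, $[X,Y]=XY-YX$ and $[X,Y]_q=qXY-q^{-1}YX$. Let $\rho=-(q^2-q^{-2})^2$. The algebra $\mathcal O_q$ is defined by generators $\mathcal W_{-k},\mathcal W_{k+1},\mathcal G_{k+1},\tilde{\mathcal G}_{k+1}$ ($k\in\mathbb N$) and the following relations for all $k,\ell\in\mathbb N$: $[\mathcal W_0,\mathcal W_{k+1}]=[\mathcal W_{-k},\mathcal W_1]=(\tilde{\mathcal G}_{k+1}-\mathcal G_{k+1})/(q+q^{-1})$; $[\mathcal W_0,\mathcal G_{k+1}]_q=[\tilde{\mathcal G}_{k+1},\mathcal W_0]_q=\rho\mathcal W_{-k-1}-\rho\mathcal W_{k+1}$; $[\mathcal G_{k+1},\mathcal W_1]_q=[\mathcal W_1,\tilde{\mathcal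 G}_{k+1}]_q=\rho\mathcal W_{k+2}-\rho\mathcal W_{-k}$; $[\mathcal W_{-k},\mathcal W_{-\ell}]=0$, $[\mathcal W_{k+1},\mathcal W_{\ell+1}]=0$; $[\mathcal W_{-k},\mathcal W_{\ell+1}]+[\mathcal W_{k+1},\mathcal W_{-\ell}]=0$; $[\mathcal W_{-k},\mathcal G_{\ell+1}]+[\mathcal G_{k+1},\mathcal W_{-\ell}]=0$; $[\mathcal W_{-k},\tilde{\mathcal G}_{\ell+1}]+[\tilde{\mathcal G}_{k+1},\mathcal W_{-\ell}]=0$; $[\mathcal W_{k+1},\mathcal G_{\ell+1}]+[\mathcal G_{k+1},\mathcal W_{\ell+1}]=0$; $[\mathcal W_{k+1},\tilde{\mathcal G}_{\ell+1}]+[\tilde{\mathcal G}_{k+1},\mathcal W_{\ell+1}]=0$; $[\mathcal G_{k+1},\mathcal G_{\ell+1}]=0$, $[\tilde{\mathcal G}_{k+1},\tilde{\mathcal G}_{\ell+1}]=0$; $[\tilde{\mathcal G}_{k+1},\mathcal G_{\ell+1}]+[\mathcal G_{k+1},\tilde{\mathcal G}_{\ell+1}]=0$. Convention: $\tilde{\mathcal G}_0=-(q-q^{-1})[2]_q^2$. Define $B_\delta=q^{-2}\mathcal W_1\mathcal W_0-\mathcal W_0\mathcal W_1$; $B_{\alpha_0}=\mathcal W_0$, $B_{\delta+\alpha_0}=\mathcal W_1+\frac{q[B_\delta,\mathcal W_0]}{(q-q^{-1})(q^2-q^{-2})}$, $B_{n\delta+\alpha_0}=B_{(n-2)\delta+\alpha_0}+\frac{q[B_\delta,B_{(n-1)\delta+\alpha_0}]}{(q-q^{-1})(q^2-q^{-2})}$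 for $n\ge2$; $B_{\alpha_1}=\mathcal W_1$, $B_{\delta+\alpha_1}=\mathcal W_0-\frac{q[B_\delta,\mathcal W_1]}{(q-q^{-1})(q^2-q^{-2})}$, $B_{n\delta+\alpha_1}=B_{(n-2)\delta+\alpha_1}-\frac{q[B_\delta,B_{(n-1)\delta+\alpha_1}]}{(q-q^{-1})(q^2-q^{-2})}$ for $n\ge2$. For negative integers $k$, set $B_{k\delta+\alpha_0}=B_{(-k-1)\delta+\alpha_1}$ and $B_{k\delta+\alpha_1}=B_{(-k-1)\delta+\alpha_0}$. *)

theory Defs
  imports Main
begin

text \<open>An associative unital F-algebra is modelled as a ring_1 type 'a together with
a unital ring homomorphism sc from the field 'f into the centre of 'a.
The algebra O_q is presented by generators and relations; an identity holds in O_q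
iff it holds for every family of elements satisfying the relations in every F-algebra.
Indexing: Wm k = W_{-k}, Wp k = W_{k+1}, G k = G_{k+1}, Gt k = tilde G_{k+1}.\<close>

definition is_alg_map :: "('f::field \<Rightarrow> 'a::ring_1) \<Rightarrow> bool" where
  "is_alg_map sc \<longleftrightarrow> sc 1 = 1 \<and> (\<forall>x y. sc (x + y) = sc x + sc y)
     \<and> (\<forall>x y. sc (x * y) = sc x * sc y) \<and> (\<forall>c a. sc c * a = a * sc c)"

definition comm :: "'a::ring_1 \<Rightarrow> 'a \<Rightarrow> 'a" where
  "comm X Y = X * Y - Y * X"

definition qcomm :: "('f::field \<Rightarrow> 'a::ring_1) \<Rightarrow> 'f \<Rightarrow> 'a \<Rightarrow> 'a \<Rightarrow> 'a" where
  "qcomm sc q X Y = sc q * X * Y - sc (inverse q) * Y * X"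

definition qint :: "'f::field \<Rightarrow> nat \<Rightarrow> 'f" where
  "qint q n = (q ^ n - inverse q ^ n) / (q - inverse q)"

definition rho :: "'f::field \<Rightarrow> 'f" where
  "rho q = - ((q ^ 2 - inverse q ^ 2) ^ 2)"

definition Oq_rel :: "('f::field \<Rightarrow> 'a::ring_1) \<Rightarrow> 'f \<Rightarrow> (nat \<Rightarrow> 'a) \<Rightarrow> (nat \<Rightarrow> 'a)
    \<Rightarrow> (nat \<Rightarrow> 'a) \<Rightarrow> (nat \<Rightarrow> 'a) \<Rightarrow> bool" where
  "Oq_rel sc q Wm Wp G Gt \<longleftrightarrow>
    (\<forall>k. comm (Wm 0) (Wp k) = sc (inverse (q + inverse q)) * (Gt k - G k)
       \<and> comm (Wm k) (Wp 0) = sc (inverse (q + inverse q)) * (Gt k - G k)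
       \<and> qcomm sc q (Wm 0) (G k) = sc (rho q) * (Wm (k+1) - Wp k)
       \<and> qcomm sc q (Gt k) (Wm 0) = sc (rho q) * (Wm (k+1) - Wp k)
       \<and> qcomm sc q (G k) (Wp 0) = sc (rho q) * (Wp (k+1) - Wm k)
       \<and> qcomm sc q (Wp 0) (Gt k) = sc (rho q) * (Wp (k+1) - Wm k))
  \<and> (\<forall>k l. comm (Wm k) (Wm l) = 0 \<and> comm (Wp k) (Wp l) = 0
       \<and> comm (Wm k) (Wp l) + comm (Wp k) (Wm l) = 0
       \<and> comm (Wm k) (G l) + comm (G k) (Wm l) = 0
       \<and> comm (Wm k) (Gt l) + comm (Gt k) (Wm l) = 0
       \<and> comm (Wp k) (G l) + comm (G k) (Wp l) = 0
       \<and> comm (Wp k) (Gt l) + comm (Gt k) (Wp l) = 0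
       \<and> comm (G k) (G l) = 0 \<and> comm (Gt k) (Gt l) = 0
       \<and> comm (Gt k) (G l) + comm (G k) (Gt l) = 0)"

definition Gtil :: "('f::field \<Rightarrow> 'a::ring_1) \<Rightarrow> 'f \<Rightarrow> (nat \<Rightarrow> 'a) \<Rightarrow> nat \<Rightarrow> 'a" where
  "Gtil sc q Gt n = (if n = 0 then sc (- (q - inverse q) * (qint q 2) ^ 2) else Gt (n - 1))"

definition Bdelta :: "('f::field \<Rightarrow> 'a::ring_1) \<Rightarrow> 'f \<Rightarrow> 'a \<Rightarrow> 'a \<Rightarrow> 'a" where
  "Bdelta sc q W0 W1 = sc (inverse q ^ 2) * W1 * W0 - W0 * W1"

definition Bcoef :: "'f::field \<Rightarrow> 'f" where
  "Bcoef q = q / ((q - inverse q) * (q ^ 2 - inverse q ^ 2))"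

text \<open>B0 n = B_{n delta + alpha_0}, B1 n = B_{n delta + alpha_1} for n in N.\<close>
fun B0 :: "('f::field \<Rightarrow> 'a::ring_1) \<Rightarrow> 'f \<Rightarrow> 'a \<Rightarrow> 'a \<Rightarrow> nat \<Rightarrow> 'a" where
  "B0 sc q W0 W1 0 = W0"
| "B0 sc q W0 W1 (Suc 0) = W1 + sc (Bcoef q) * comm (Bdelta sc q W0 W1) W0"
| "B0 sc q W0 W1 (Suc (Suc n)) = B0 sc q W0 W1 n
     + sc (Bcoef q) * comm (Bdelta sc q W0 W1) (B0 sc q W0 W1 (Suc n))"

fun B1 :: "('f::field \<Rightarrow> 'a::ring_1) \<Rightarrow> 'f \<Rightarrow> 'a \<Rightarrow> 'a \<Rightarrow> nat \<Rightarrow> 'a" where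
  "B1 sc q W0 W1 0 = W1"
| "B1 sc q W0 W1 (Suc 0) = W0 - sc (Bcoef q) * comm (Bdelta sc q W0 W1) W1"
| "B1 sc q W0 W1 (Suc (Suc n)) = B1 sc q W0 W1 n
     - sc (Bcoef q) * comm (Bdelta sc q W0 W1) (B1 sc q W0 W1 (Suc n))"

text \<open>Integer-indexed versions: B_{m delta + alpha_0}, B_{m delta + alpha_1} for m in Z.\<close>
definition BZ0 :: "('f::field \<Rightarrow> 'a::ring_1) \<Rightarrow> 'f \<Rightarrow> 'a \<Rightarrow> 'a \<Rightarrow> int \<Rightarrow> 'a" where
  "BZ0 sc q W0 W1 m = (if 0 \<le> m then B0 sc q W0 W1 (nat m) else B1 sc q W0 W1 (nat (- m - 1)))"

definition BZ1 :: "('f::field \<Rightarrow> 'a::ring_1) \<Rightarrow> 'f \<Rightarrow> 'a \<Rightarrow> 'a \<Rightarrow> int \<Rightarrow> 'a" where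
  "BZ1 sc q W0 W1 m = (if 0 \<le> m then B1 sc q W0 W1 (nat m) else B0 sc q W0 W1 (nat (- m - 1)))"

end

theory Submission
  imports Defs
begin

locale oq =
  fixes sc :: "'f::field \<Rightarrow> 'a::ring_1" and q :: 'f
    and Wm Wp G Gt :: "nat \<Rightarrow> 'a"
  assumes alg: "is_alg_map sc"
    and q0: "q \<noteq> 0" and nroot: "\<forall>m::nat. m > 0 \<longrightarrow> q ^ m \<noteq> 1"
    and rel: "Oq_rel sc q Wm Wp G Gt"
begin

lemma sc1[simp]: "sc 1 = 1" using alg unfolding is_alg_map_def by blast
lemma sc_add: "sc (x + y) = sc x + sc y" using alg unfolding is_alg_map_def by blast
lemma sc_mult: "sc (x * y) = sc x * sc y" using alg unfolding is_alg_map_def by blast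
lemma sc_central: "sc c * a = a * sc c" using alg unfolding is_alg_map_def by blast
lemma sc0[simp]: "sc 0 = 0" using sc_add[of 0 0] by simp
lemma sc_neg: "sc (- x) = - sc x"
proof -
  have "sc x + sc (- x) = 0" using sc_add[of x "-x"] by simp
  hence "- sc x = sc (- x)" by (rule minus_unique)
  thus ?thesis by simp
qed
lemma sc_diff: "sc (x - y) = sc x - sc y" by (simp only: diff_conv_add_uminus sc_add sc_neg)

lemma sc_assoc[simp]: "sc a * (sc b * x) = sc (a * b) * x"
  by (simp add: sc_mult mult.assoc)
lemma sc_pull: "x * (sc a * y) = sc a * (x * y)"
  by (metis mult.assoc sc_central)
lemma sc_addL: "sc a * x + sc b * x = sc (a + b) * x"
  by (simp add: sc_add distrib_right)

lemma q2: "q ^ 2 \<noteq> 1" using nroot by auto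
lemma q4: "q ^ 4 \<noteq> 1" using nroot by auto
lemma e0: "q - inverse q \<noteq> 0"
proof
  assume "q - inverse q = 0"
  hence "q * q = q * inverse q" by simp
  hence "q^2 = 1" using q0 by (simp add: power2_eq_square)
  thus False using q2 by simp
qed
lemma t0: "q + inverse q \<noteq> 0"
proof
  assume "q + inverse q = 0"
  hence "q * (q + inverse q) = 0" by simp
  hence "q * q + 1 = 0" using q0 by (simp add: distrib_left)
  hence "q^2 = -1" by (simp add: power2_eq_square eq_neg_iff_add_eq_0)
  have "q^4 = (q^2)^2" by (simp add: power_mult[symmetric])
  also have "... = 1" using \<open>q^2 = -1\<close> by simp
  finally have "q^4 = 1" .
  thus False using q4 by simp
qed
lemma qint2: "qint q 2 = q + inverse q"
  using e0 q0 by (simp add: qint_def field_simps power2_eq_square)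

lemma relk:
  "comm (Wm 0) (Wp k) = sc (inverse (q + inverse q)) * (Gt k - G k)"
  "comm (Wm k) (Wp 0) = sc (inverse (q + inverse q)) * (Gt k - G k)"
  "qcomm sc q (Wm 0) (G k) = sc (rho q) * (Wm (k+1) - Wp k)"
  "qcomm sc q (Gt k) (Wm 0) = sc (rho q) * (Wm (k+1) - Wp k)"
  "qcomm sc q (G k) (Wp 0) = sc (rho q) * (Wp (k+1) - Wm k)"
  "qcomm sc q (Wp 0) (Gt k) = sc (rho q) * (Wp (k+1) - Wm k)"
  using rel unfolding Oq_rel_def by blast+

lemma relkl:
  "comm (Wm k) (Wm l) = 0" "comm (Wp k) (Wp l) = 0"
  "comm (Wm k) (Wp l) + comm (Wp k) (Wm l) = 0"
  "comm (Wm k) (G l) + comm (G k) (Wm l) = 0"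
  "comm (Wm k) (Gt l) + comm (Gt k) (Wm l) = 0"
  "comm (Wp k) (G l) + comm (G k) (Wp l) = 0"
  "comm (Wp k) (Gt l) + comm (Gt k) (Wp l) = 0"
  "comm (G k) (G l) = 0" "comm (Gt k) (Gt l) = 0"
  "comm (Gt k) (G l) + comm (G k) (Gt l) = 0"
  using rel unfolding Oq_rel_def by blast+

lemma sc_inv_cancel: "x \<noteq> 0 \<Longrightarrow> sc x * (sc (inverse x) * y) = y"
  by simp

lemma sc_powi_simp: "sc q * (sc (inverse q) * y) = y" "sc (inverse q) * (sc q * y) = y"
  using q0 by simp_all

lemma Gt_G0: "Gt 0 - G 0 = sc (q + inverse q) * (Wm 0 * Wp 0 - Wp 0 * Wm 0)"
proof -
  have "sc (q + inverse q) * comm (Wm 0) (Wp 0) = Gt 0 - G 0"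
    using relk(1)[of 0] t0 by simp
  thus ?thesis by (simp add: comm_def)
qed

lemma pullW:
  "Wm k * (sc a * y) = sc a * (Wm k * y)" "Wp k * (sc a * y) = sc a * (Wp k * y)"
  "G k * (sc a * y) = sc a * (G k * y)" "Gt k * (sc a * y) = sc a * (Gt k * y)"
  "Wm k * sc a = sc a * Wm k" "Wp k * sc a = sc a * Wp k"
  "G k * sc a = sc a * G k" "Gt k * sc a = sc a * Gt k"
  by (rule sc_pull)+ (rule sc_central[symmetric])+

lemma qcanc:
  "q * inverse q = 1" "q * (inverse q * y) = y" "q * (q * (inverse q * y)) = q * y"
  "q * (q * (q * (inverse q * y))) = q * (q * y)"
  using q0 by (simp_all add: mult.assoc[symmetric])

lemma z_W0: "comm (Wm 0) (Gt 0 + sc q * Bdelta sc q (Wm 0) (Wp 0)) = 0"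
proof -
  define X where "X = Wm 0 * Wp 0 - Wp 0 * Wm 0"
  have G0: "G 0 = Gt 0 - sc (q + inverse q) * X" using Gt_G0 unfolding X_def by (simp add: algebra_simps)
  have hb: "sc q * Wm 0 * G 0 - sc (inverse q) * G 0 * Wm 0 = sc q * Gt 0 * Wm 0 - sc (inverse q) * Wm 0 * Gt 0"
    using relk(3)[of 0] relk(4)[of 0] unfolding qcomm_def by simp
  have "sc (q + inverse q) * comm (Wm 0) (Gt 0 + sc q * Bdelta sc q (Wm 0) (Wp 0)) =
     (sc q * Wm 0 * G 0 - sc (inverse q) * G 0 * Wm 0) - (sc q * Gt 0 * Wm 0 - sc (inverse q) * Wm 0 * Gt 0)"
    unfolding G0 X_def comm_def Bdelta_def
    apply (simp add: algebra_simps pullW sc_add sc_diff power2_eq_square)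
    apply (simp add: qcanc)
    done
  also have "... = 0" using hb by simp
  finally have h: "sc (q + inverse q) * comm (Wm 0) (Gt 0 + sc q * Bdelta sc q (Wm 0) (Wp 0)) = 0" .
  have "comm (Wm 0) (Gt 0 + sc q * Bdelta sc q (Wm 0) (Wp 0)) = sc (inverse (q + inverse q)) * (sc (q + inverse q) * comm (Wm 0) (Gt 0 + sc q * Bdelta sc q (Wm 0) (Wp 0)))"
    using t0 by simp
  with h show ?thesis by simp
qed

lemma z_W1: "comm (Wp 0) (Gt 0 + sc q * Bdelta sc q (Wm 0) (Wp 0)) = 0"
proof -
  define X where "X = Wm 0 * Wp 0 - Wp 0 * Wm 0"
  have G0: "G 0 = Gt 0 - sc (q + inverse q) * X" using Gt_G0 unfolding X_def by (simp add: algebra_simps)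
  have hb: "sc q * G 0 * Wp 0 - sc (inverse q) * Wp 0 * G 0 = sc q * Wp 0 * Gt 0 - sc (inverse q) * Gt 0 * Wp 0"
    using relk(5)[of 0] relk(6)[of 0] unfolding qcomm_def by simp
  have "sc (q + inverse q) * comm (Wp 0) (Gt 0 + sc q * Bdelta sc q (Wm 0) (Wp 0)) =
     (sc q * Wp 0 * Gt 0 - sc (inverse q) * Gt 0 * Wp 0) - (sc q * G 0 * Wp 0 - sc (inverse q) * Wp 0 * G 0)"
    unfolding G0 X_def comm_def Bdelta_def
    apply (simp add: algebra_simps pullW sc_add sc_diff power2_eq_square)
    apply (simp add: qcanc)
    done
  also have "... = 0" using hb by simp
  finally have h: "sc (q + inverse q) * comm (Wp 0) (Gt 0 + sc q * Bdelta sc q (Wm 0) (Wp 0)) = 0" .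
  have "comm (Wp 0) (Gt 0 + sc q * Bdelta sc q (Wm 0) (Wp 0)) = sc (inverse (q + inverse q)) * (sc (q + inverse q) * comm (Wp 0) (Gt 0 + sc q * Bdelta sc q (Wm 0) (Wp 0)))"
    using t0 by simp
  with h show ?thesis by simp
qed

abbreviation "Bd \<equiv> Bdelta sc q (Wm 0) (Wp 0)"
definition zz where "zz = Gt 0 + sc q * Bd"

lemma z_W0': "comm (Wm 0) zz = 0" using z_W0 by (simp add: zz_def)
lemma z_W1': "comm (Wp 0) zz = 0" using z_W1 by (simp add: zz_def)
lemma comm_scz: "comm (sc a) zz = 0" by (simp add: comm_def sc_central)

definition b :: "int \<Rightarrow> 'a" where "b m = BZ0 sc q (Wm 0) (Wp 0) m"

lemma comm_mult: "comm (x * y) z = x * comm y z + comm x z * y"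
  by (simp add: comm_def algebra_simps)
lemma comm_add: "comm (x + y) z = comm x z + comm y z"
  by (simp add: comm_def algebra_simps)
lemma comm_diff: "comm (x - y) z = comm x z - comm y z"
  by (simp add: comm_def algebra_simps)
lemma comm_sc: "comm (sc a * x) z = sc a * comm x z"
  by (simp add: comm_def algebra_simps sc_pull)
lemma comm_sc2: "comm x (sc a * z) = sc a * comm x z"
  by (simp add: comm_def algebra_simps sc_pull)
lemma comm_add2: "comm x (y + z) = comm x y + comm x z"
  by (simp add: comm_def algebra_simps)
lemma comm_diff2: "comm x (y - z) = comm x y - comm x z"
  by (simp add: comm_def algebra_simps)
lemma comm_anti: "comm x y = - comm y x"
  by (simp add: comm_def)
lemma comm_sum: "comm (sum f A) z = (\<Sum>i\<in>A. comm (f i) z)"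
  by (simp add: comm_def sum_distrib_left sum_distrib_right sum_subtractf)

lemma cz_mult: "comm x zz = 0 \<Longrightarrow> comm y zz = 0 \<Longrightarrow> comm (x * y) zz = 0"
  by (simp add: comm_mult)
lemma cz_add: "comm x zz = 0 \<Longrightarrow> comm y zz = 0 \<Longrightarrow> comm (x + y) zz = 0"
  by (simp add: comm_add)
lemma cz_diff: "comm x zz = 0 \<Longrightarrow> comm y zz = 0 \<Longrightarrow> comm (x - y) zz = 0"
  by (simp add: comm_diff)

lemma cz_comm: "comm x zz = 0 \<Longrightarrow> comm y zz = 0 \<Longrightarrow> comm (comm x y) zz = 0"
  unfolding comm_def[of x y] by (intro cz_diff cz_mult)
lemma cz_scm: "comm x zz = 0 \<Longrightarrow> comm (sc a * x) zz = 0"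
  by (intro cz_mult comm_scz)

lemma zz_Bd: "comm Bd zz = 0"
  unfolding Bdelta_def
  by (intro cz_mult cz_add cz_diff z_W0' z_W1' comm_scz)

lemma zz_B0: "comm (B0 sc q (Wm 0) (Wp 0) n) zz = 0"
proof -
  have "comm (B0 sc q (Wm 0) (Wp 0) n) zz = 0 \<and> comm (B0 sc q (Wm 0) (Wp 0) (Suc n)) zz = 0"
  proof (induction n)
    case 0
    then show ?case by (auto intro!: cz_scm cz_comm cz_add cz_diff z_W0' z_W1' comm_scz zz_Bd)
  next
    case (Suc n)
    then show ?case by (auto intro!: cz_scm cz_comm cz_add cz_diff z_W0' z_W1' comm_scz zz_Bd)
  qed
  thus ?thesis by blast
qed

lemma zz_B1: "comm (B1 sc q (Wm 0) (Wp 0) n) zz = 0"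
proof -
  have "comm (B1 sc q (Wm 0) (Wp 0) n) zz = 0 \<and> comm (B1 sc q (Wm 0) (Wp 0) (Suc n)) zz = 0"
  proof (induction n)
    case 0
    then show ?case by (auto intro!: cz_scm cz_comm cz_add cz_diff z_W0' z_W1' comm_scz zz_Bd)
  next
    case (Suc n)
    then show ?case by (auto intro!: cz_scm cz_comm cz_add cz_diff z_W0' z_W1' comm_scz zz_Bd)
  qed
  thus ?thesis by blast
qed

lemma zz_b: "comm (b m) zz = 0"
  unfolding b_def BZ0_def using zz_B0 zz_B1 by simp

lemma b_Gt0: "comm (b m) (Gt 0) = sc q * comm Bd (b m)"
proof -
  have "Gt 0 = zz - sc q * Bd" by (simp add: zz_def)
  hence "comm (b m) (Gt 0) = comm (b m) zz - sc q * comm (b m) Bd"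
    by (simp add: comm_diff2 comm_sc2)
  thus ?thesis using zz_b comm_anti[of "b m" Bd] by simp
qed

lemma b0: "b 0 = Wm 0" by (simp add: b_def BZ0_def)
lemma bm1: "b (-1) = Wp 0" by (simp add: b_def BZ0_def)

lemma brec: "b (m + 1) - b (m - 1) = sc (Bcoef q) * comm Bd (b m)"
proof (cases "m \<ge> 1")
  case True
  define n where "n = nat (m - 1)"
  hence n: "m = int n + 1" using True by simp
  have "b (m+1) = B0 sc q (Wm 0) (Wp 0) (Suc (Suc n))" unfolding b_def BZ0_def n
    by (simp add: nat_add_distrib)
  moreover have "b (m-1) = B0 sc q (Wm 0) (Wp 0) n" unfolding b_def BZ0_def n by simp
  moreover have "b m = B0 sc q (Wm 0) (Wp 0) (Suc n)" unfolding b_def BZ0_def n by (simp add: nat_add_distrib)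
  ultimately show ?thesis by (simp add: comm_def)
next
  case False
  show ?thesis
  proof (cases "m = 0")
    case True
    then show ?thesis by (simp add: b_def BZ0_def comm_def)
  next
    case m0: False
    show ?thesis
    proof (cases "m = -1")
      case True
      then show ?thesis by (simp add: b_def BZ0_def comm_def)
    next
      case False
      define n where "n = nat (- m - 2)"
      hence n: "m = - int n - 2" using m0 False \<open>\<not> m \<ge> 1\<close> by simp
      have "b (m+1) = B1 sc q (Wm 0) (Wp 0) n" unfolding b_def BZ0_def n by simp
      moreover have "b (m-1) = B1 sc q (Wm 0) (Wp 0) (Suc (Suc n))" unfolding b_def BZ0_def n
        by (simp add: nat_add_distrib)
      moreover have "b m = B1 sc q (Wm 0) (Wp 0) (Suc n)" unfolding b_def BZ0_def n by (simp add: nat_add_distrib)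
      ultimately show ?thesis by (simp add: comm_def)
    qed
  qed
qed

lemma c0: "Bcoef q \<noteq> 0"
proof -
  have "q ^ 2 - inverse q ^ 2 = (q - inverse q) * (q + inverse q)" by (simp add: algebra_simps power2_eq_square)
  hence "q ^ 2 - inverse q ^ 2 \<noteq> 0" using e0 t0 by simp
  thus ?thesis using q0 e0 by (simp add: Bcoef_def)
qed

lemma b_Gt: "comm (b m) (Gt 0) = sc (q / Bcoef q) * (b (m + 1) - b (m - 1))"
  using c0 by (simp add: brec b_Gt0)

definition Pb :: "int \<Rightarrow> nat \<Rightarrow> 'a" where
  "Pb s k = (\<Sum>l\<le>k. sc (of_nat (k choose l) * q powi (int k - 2 * int l)) * b (int k - 2 * int l + s))"

lemma Pb_0: "Pb s 0 = b s" by (simp add: Pb_def)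

lemma Pb_Gt: "comm (Pb s k) (Gt 0) = sc (q / Bcoef q) * (Pb (s + 1) k - Pb (s - 1) k)"
  unfolding Pb_def comm_sum
  by (simp add: comm_sc b_Gt sum_distrib_left sum_subtractf right_diff_distrib add.assoc diff_add_eq_diff_diff_swap mult_ac add_diff_eq)

lemma Pb_Suc: "Pb s (Suc k) = sc q * Pb (s + 1) k + sc (inverse q) * Pb (s - 1) k"
proof -
  define g where "g j l = sc (of_nat j * q powi (int (Suc k) - 2 * int l)) * b (int (Suc k) - 2 * int l + s)" for j l
  have gadd: "g (i + j) l = g i l + g j l" for i j l by (simp add: g_def distrib_right sc_add)
  have g0: "g 0 l = 0" for l by (simp add: g_def)
  have A: "(\<Sum>l\<le>k. g (k choose l) l) = sc q * Pb (s + 1) k"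
    unfolding Pb_def sum_distrib_left
  proof (rule sum.cong[OF refl])
    fix l assume "l \<in> {..k}"
    have e1: "int (Suc k) - 2 * int l = (int k - 2 * int l) + 1" by simp
    have e2: "int (Suc k) - 2 * int l + s = int k - 2 * int l + (s + 1)" by simp
    have p: "q powi (int (Suc k) - 2 * int l) = q * q powi (int k - 2 * int l)"
      unfolding e1 using q0 by (simp add: power_int_add_1')
    show "g (k choose l) l = sc q * (sc (of_nat (k choose l) * q powi (int k - 2 * int l)) * b (int k - 2 * int l + (s + 1)))"
      unfolding g_def p e2 by (simp add: mult_ac)
  qed
  have B: "(\<Sum>l\<le>k. g (k choose l) (Suc l)) = sc (inverse q) * Pb (s - 1) k"
    unfolding Pb_def sum_distrib_left
  proof (rule sum.cong[OF refl])
    fix l assume "l \<in> {..k}"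
    have e1: "int (Suc k) - 2 * int (Suc l) = (int k - 2 * int l) - 1" by simp
    have e2: "int (Suc k) - 2 * int (Suc l) + s = int k - 2 * int l + (s - 1)" by simp
    have p: "q powi (int (Suc k) - 2 * int (Suc l)) = inverse q * q powi (int k - 2 * int l)"
      unfolding e1 using q0 by (simp add: power_int_diff divide_inverse mult.commute)
    show "g (k choose l) (Suc l) = sc (inverse q) * (sc (of_nat (k choose l) * q powi (int k - 2 * int l)) * b (int k - 2 * int l + (s - 1)))"
      unfolding g_def p e2 by (simp add: mult_ac)
  qed
  have "Pb s (Suc k) = (\<Sum>l\<le>Suc k. g (Suc k choose l) l)" by (simp add: Pb_def g_def)
  also have "... = g 1 0 + (\<Sum>l\<le>k. g (Suc k choose Suc l) (Suc l))" by (subst sum.atMost_Suc_shift) simp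
  also have "... = g 1 0 + ((\<Sum>l\<le>k. g (k choose Suc l) (Suc l)) + (\<Sum>l\<le>k. g (k choose l) (Suc l)))"
    by (simp add: gadd sum.distrib add.commute)
  also have "... = (g (k choose 0) 0 + (\<Sum>l\<le>k. g (k choose Suc l) (Suc l))) + (\<Sum>l\<le>k. g (k choose l) (Suc l))"
    by (simp add: add.assoc)
  also have "g (k choose 0) 0 + (\<Sum>l\<le>k. g (k choose Suc l) (Suc l)) = (\<Sum>l\<le>Suc k. g (k choose l) l)"
    by (simp only: sum.atMost_Suc_shift)
  also have "... = (\<Sum>l\<le>k. g (k choose l) l)" using g0[of "Suc k"] by (simp add: binomial_eq_0)
  finally show ?thesis using A B by (simp add: add.commute)
qed

definition al :: "nat \<Rightarrow> 'f" where
  "al k = - (inverse (q - inverse q) * (q + inverse q) powi (- int k - 2))"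

definition F :: "int \<Rightarrow> nat \<Rightarrow> 'a" where
  "F s n = (\<Sum>k\<le>n. sc (al k) * Pb s k * Gtil sc q Gt (n - k))"

lemma field_aux: "(x::'f) \<noteq> 0 \<Longrightarrow> X * x = Y \<Longrightarrow> X = Y * inverse x"
  by (simp add: field_simps)

lemma al_Suc: "al (Suc k) = al k * inverse (q + inverse q)"
proof -
  have m: "- int (Suc k) - 2 = (- int k - 2) - 1" by simp
  have "(q + inverse q) powi ((- int k - 2) - 1) * (q + inverse q) = (q + inverse q) powi (- int k - 2)"
    using t0 by (rule power_int_minus_mult[OF disjI1])
  hence "(q + inverse q) powi ((- int k - 2) - 1) = (q + inverse q) powi (- int k - 2) * inverse (q + inverse q)"
    by (rule field_aux[OF t0])
  thus ?thesis unfolding al_def m by (simp add: mult.assoc)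
qed

lemma rho_eq: "rho q = - (((q - inverse q) * (q + inverse q)) ^ 2)"
  by (simp add: rho_def algebra_simps power2_eq_square)
lemma Bcoef_eq: "Bcoef q = q / ((q - inverse q) * (q - inverse q) * (q + inverse q))"
  by (simp add: Bcoef_def algebra_simps power2_eq_square)

lemma scal_abs:
  fixes x e t a :: 'f
  assumes "x \<noteq> 0" "e \<noteq> 0" "t \<noteq> 0" "t = x + inverse x"
  shows "a * inverse t * x = - (inverse (- ((e * t) ^ 2)) * x * (a * (x / (x / (e * e * t)))))"
    and "a * inverse t * inverse x = a + inverse (- ((e * t) ^ 2)) * x * (a * (x / (x / (e * e * t))))"
    and "a * inverse t * x = a + inverse (- ((e * t) ^ 2)) * inverse x * (a * (x / (x / (e * e * t))))"
    and "a * inverse t * inverse x = - (inverse (- ((e * t) ^ 2)) * inverse x * (a * (x / (x / (e * e * t)))))"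
proof -
  have K1: "inverse (- ((e * t) ^ 2)) * x * (a * (x / (x / (e * e * t)))) = - (a * x * inverse t)"
    using assms(1-3) by (simp add: field_simps power2_eq_square)
  have K2: "inverse (- ((e * t) ^ 2)) * inverse x * (a * (x / (x / (e * e * t)))) = - (a * inverse x * inverse t)"
    using assms(1-3) by (simp add: field_simps power2_eq_square)
  have ix: "inverse x = t - x" "x = t - inverse x" using assms(4) by simp_all
  show "a * inverse t * x = - (inverse (- ((e * t) ^ 2)) * x * (a * (x / (x / (e * e * t)))))"
    unfolding K1 by simp
  show "a * inverse t * inverse x = - (inverse (- ((e * t) ^ 2)) * inverse x * (a * (x / (x / (e * e * t)))))"
    unfolding K2 by simp
  have "a * inverse t * inverse x = a * inverse t * (t - x)" using ix by simp
  also have "... = a - a * x * inverse t" using assms(3) by (simp add: field_simps)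
  finally show "a * inverse t * inverse x = a + inverse (- ((e * t) ^ 2)) * x * (a * (x / (x / (e * e * t))))"
    unfolding K1 by simp
  have "a * inverse t * x = a * inverse t * (t - inverse x)" using ix by simp
  also have "... = a - a * inverse x * inverse t" using assms(3) by (simp add: field_simps)
  finally show "a * inverse t * x = a + inverse (- ((e * t) ^ 2)) * inverse x * (a * (x / (x / (e * e * t))))"
    unfolding K2 by simp
qed

lemma stepA: "sc (al (Suc k)) * Pb s (Suc k) = sc (al k) * Pb (s - 1) k
   - sc (inverse (rho q) * q * (al k * (q / Bcoef q))) * (Pb (s + 1) k - Pb (s - 1) k)"
proof -
  note S = scal_abs[OF q0 e0 t0 refl, of "al k", folded rho_eq Bcoef_eq al_Suc]
  have "sc (al (Suc k)) * Pb s (Suc k) = sc (al (Suc k) * q) * Pb (s + 1) k + sc (al (Suc k) * inverse q) * Pb (s - 1) k"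
    unfolding Pb_Suc by (simp add: distrib_left)
  also have "... = sc (al k) * Pb (s - 1) k
   - sc (inverse (rho q) * q * (al k * (q / Bcoef q))) * (Pb (s + 1) k - Pb (s - 1) k)"
    unfolding S(1) S(2) by (simp add: sc_neg sc_add distrib_right right_diff_distrib)
  finally show ?thesis .
qed

lemma stepB: "sc (al (Suc k)) * Pb s (Suc k) = sc (al k) * Pb (s + 1) k
   + sc (inverse (rho q) * inverse q * (al k * (q / Bcoef q))) * (Pb (s + 1) k - Pb (s - 1) k)"
proof -
  note S = scal_abs[OF q0 e0 t0 refl, of "al k", folded rho_eq Bcoef_eq al_Suc]
  have "sc (al (Suc k)) * Pb s (Suc k) = sc (al (Suc k) * q) * Pb (s + 1) k + sc (al (Suc k) * inverse q) * Pb (s - 1) k"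
    unfolding Pb_Suc by (simp add: distrib_left)
  also have "... = sc (al k) * Pb (s + 1) k
   + sc (inverse (rho q) * inverse q * (al k * (q / Bcoef q))) * (Pb (s + 1) k - Pb (s - 1) k)"
    unfolding S(3) S(4) by (simp add: sc_neg sc_add distrib_right right_diff_distrib)
  finally show ?thesis .
qed

lemma Gtil_comm: "comm (Gtil sc q Gt j) (Gt 0) = 0"
  by (cases j) (simp_all add: Gtil_def comm_def sc_central relkl(9)[unfolded comm_def])

lemma comm_scPG: "comm (sc a * P * Gtil sc q Gt j) (Gt 0) = sc a * comm P (Gt 0) * Gtil sc q Gt j"
proof -
  have "comm (X * Gtil sc q Gt j) (Gt 0) = comm X (Gt 0) * Gtil sc q Gt j" for X
    by (simp add: comm_mult Gtil_comm)
  thus ?thesis by (simp add: comm_sc)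
qed

lemma F_split: "F s (Suc n) = sc (al 0) * (b s * Gt n) + (\<Sum>k\<le>n. sc (al (Suc k)) * Pb s (Suc k) * Gtil sc q Gt (n - k))"
  unfolding F_def by (subst sum.atMost_Suc_shift) (simp add: Pb_0 Gtil_def mult.assoc)

lemma Fcomm: "comm (F s n) (Gt 0) = (\<Sum>k\<le>n. sc (al k) * (sc (q / Bcoef q) * (Pb (s + 1) k - Pb (s - 1) k)) * Gtil sc q Gt (n - k))"
  unfolding F_def comm_sum comm_scPG Pb_Gt ..

lemma F_stepA: "F s (Suc n) = sc (al 0) * (b s * Gt n) + F (s - 1) n - sc (inverse (rho q) * q) * comm (F s n) (Gt 0)"
proof -
  have "(\<Sum>k\<le>n. sc (al (Suc k)) * Pb s (Suc k) * Gtil sc q Gt (n - k))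
     = (\<Sum>k\<le>n. sc (al k) * Pb (s - 1) k * Gtil sc q Gt (n - k)
        - sc (inverse (rho q) * q * (al k * (q / Bcoef q))) * (Pb (s + 1) k - Pb (s - 1) k) * Gtil sc q Gt (n - k))"
    unfolding stepA by (simp add: left_diff_distrib)
  also have "... = F (s - 1) n - sc (inverse (rho q) * q) * comm (F s n) (Gt 0)"
    unfolding Fcomm unfolding F_def sum_subtractf sum_distrib_left by (simp add: mult.assoc)
  finally show ?thesis unfolding F_split by (simp add: add_diff_eq)
qed

lemma F_stepB: "F s (Suc n) = sc (al 0) * (b s * Gt n) + F (s + 1) n + sc (inverse (rho q) * inverse q) * comm (F s n) (Gt 0)"
proof -
  have "(\<Sum>k\<le>n. sc (al (Suc k)) * Pb s (Suc k) * Gtil sc q Gt (n - k))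
     = (\<Sum>k\<le>n. sc (al k) * Pb (s + 1) k * Gtil sc q Gt (n - k)
        + sc (inverse (rho q) * inverse q * (al k * (q / Bcoef q))) * (Pb (s + 1) k - Pb (s - 1) k) * Gtil sc q Gt (n - k))"
    unfolding stepB by (simp add: distrib_right)
  also have "... = F (s + 1) n + sc (inverse (rho q) * inverse q) * comm (F s n) (Gt 0)"
    unfolding Fcomm unfolding F_def sum.distrib sum_distrib_left by (simp add: mult.assoc)
  finally show ?thesis unfolding F_split by (simp add: add.assoc)
qed

lemma rho0: "rho q \<noteq> 0" using e0 t0 by (simp add: rho_eq)

lemma al0_eq: "al 0 = - (inverse (q - inverse q) * inverse ((q + inverse q) ^ 2))"
proof -
  have m: "- int 0 - 2 = - int 2" by simp
  have "(q + inverse q) powi (- int 0 - 2) = inverse ((q + inverse q) ^ 2)"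
    unfolding m by (simp only: power_int_minus power_int_of_nat)
  thus ?thesis by (simp add: al_def)
qed

lemma scal2:
  fixes e t :: 'f assumes "e \<noteq> 0" "t \<noteq> 0"
  shows "- (inverse e * inverse (t ^ 2)) = inverse (- ((e * t) ^ 2)) * e"
    and "- (inverse e * inverse (t ^ 2)) * (- e * t ^ 2) = 1"
  using assms by (simp_all add: field_simps power2_eq_square)

lemma al0_rho: "al 0 = inverse (rho q) * (q - inverse q)"
  unfolding al0_eq rho_eq by (rule scal2(1)[OF e0 t0])

lemma al0_G: "al 0 * (- (q - inverse q) * (qint q 2) ^ 2) = 1"
  unfolding al0_eq qint2 by (rule scal2(2)[OF e0 t0])

lemma Wm_Suc: "Wm (Suc n) = Wp n + sc (inverse (rho q)) * (sc (q - inverse q) * (Wm 0 * Gt n) - sc q * comm (Wm n) (Gt 0))"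
proof -
  have h: "sc (inverse (rho q)) * qcomm sc q (Gt n) (Wm 0) = Wm (Suc n) - Wp n"
    using relk(4)[of n] rho0 by simp
  have c: "comm (Wm 0) (Gt n) = comm (Wm n) (Gt 0)"
    using relkl(5)[of n 0] comm_anti[of "Gt n" "Wm 0"] by (simp add: eq_neg_iff_add_eq_0)
  have "qcomm sc q (Gt n) (Wm 0) = sc (q - inverse q) * (Wm 0 * Gt n) - sc q * comm (Wm 0) (Gt n)"
    unfolding qcomm_def comm_def by (simp add: sc_diff algebra_simps)
  moreover have "Wm (Suc n) = Wp n + sc (inverse (rho q)) * qcomm sc q (Gt n) (Wm 0)"
    using h by (simp add: eq_diff_eq add.commute)
  ultimately show ?thesis unfolding c by simp
qed

lemma Wp_Suc: "Wp (Suc n) = Wm n + sc (inverse (rho q)) * (sc (q - inverse q) * (Wp 0 * Gt n) + sc (inverse q) * comm (Wp n) (Gt 0))"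
proof -
  have h: "sc (inverse (rho q)) * qcomm sc q (Wp 0) (Gt n) = Wp (Suc n) - Wm n"
    using relk(6)[of n] rho0 by simp
  have c: "comm (Wp 0) (Gt n) = comm (Wp n) (Gt 0)"
    using relkl(7)[of n 0] comm_anti[of "Gt n" "Wp 0"] by (simp add: eq_neg_iff_add_eq_0)
  have "qcomm sc q (Wp 0) (Gt n) = sc (q - inverse q) * (Wp 0 * Gt n) + sc (inverse q) * comm (Wp 0) (Gt n)"
    unfolding qcomm_def comm_def by (simp add: sc_diff algebra_simps)
  moreover have "Wp (Suc n) = Wm n + sc (inverse (rho q)) * qcomm sc q (Wp 0) (Gt n)"
    using h by (simp add: eq_diff_eq add.commute)
  ultimately show ?thesis unfolding c by simp
qed

lemma main: "Wm n = F 0 n \<and> Wp n = F (-1) n"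
proof (induction n)
  case 0
  have "F s 0 = sc (al 0 * (- (q - inverse q) * (qint q 2) ^ 2)) * b s" for s
    unfolding F_def by (simp add: Pb_0 Gtil_def sc_central[symmetric] mult.assoc mult_ac)
  then show ?case using al0_G by (simp add: b0 bm1)
next
  case (Suc n)
  have A: "F 0 (Suc n) = sc (al 0) * (Wm 0 * Gt n) + F (-1) n - sc (inverse (rho q) * q) * comm (F 0 n) (Gt 0)"
    using F_stepA[of 0 n] by (simp add: b0)
  have B: "F (-1) (Suc n) = sc (al 0) * (Wp 0 * Gt n) + F 0 n + sc (inverse (rho q) * inverse q) * comm (F (-1) n) (Gt 0)"
    using F_stepB[of "-1" n] by (simp add: bm1)
  show ?case
  proof
    show "Wm (Suc n) = F 0 (Suc n)"
      unfolding Wm_Suc A using Suc.IH by (simp add: al0_rho right_diff_distrib algebra_simps)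
    show "Wp (Suc n) = F (-1) (Suc n)"
      unfolding Wp_Suc B using Suc.IH by (simp add: al0_rho distrib_left algebra_simps)
  qed
qed

lemma Pb_flip: "Pb s k = (\<Sum>l\<le>k. sc (of_nat (k choose l) * q powi (2 * int l - int k)) * b (2 * int l - int k + s))"
proof -
  have "Pb s k = (\<Sum>l\<le>k. sc (of_nat (k choose (k - l)) * q powi (int k - 2 * int (k - l))) * b (int k - 2 * int (k - l) + s))"
    unfolding Pb_def atMost_atLeast0 by (subst sum.atLeastAtMost_rev) simp
  also have "... = (\<Sum>l\<le>k. sc (of_nat (k choose l) * q powi (2 * int l - int k)) * b (2 * int l - int k + s))"
  proof (rule sum.cong[OF refl])
    fix l assume "l \<in> {..k}"
    hence lk: "l \<le> k" by simp
    have e: "int k - 2 * int (k - l) = 2 * int l - int k" using lk by (simp add: of_nat_diff)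
    show "sc (of_nat (k choose (k - l)) * q powi (int k - 2 * int (k - l))) * b (int k - 2 * int (k - l) + s) =
          sc (of_nat (k choose l) * q powi (2 * int l - int k)) * b (2 * int l - int k + s)"
      unfolding e using binomial_symmetric[OF lk] by simp
  qed
  finally show ?thesis .
qed

lemma BZ1_eq: "BZ1 sc q (Wm 0) (Wp 0) m = b (2 * int l - int k - 1)" if "m = int k - 2 * int l"
  using that by (simp add: BZ1_def b_def BZ0_def)

lemma stmt0: "- (sc (inverse (q - inverse q)) *
           (\<Sum>k\<le>n. \<Sum>l\<le>k. sc (of_nat (k choose l) * q powi (int k - 2 * int l)
               * (qint q 2) powi (- int k - 2))
             * BZ0 sc q (Wm 0) (Wp 0) (int k - 2 * int l) * Gtil sc q Gt (n - k))) = F 0 n"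
  unfolding F_def Pb_def sum_distrib_left sum_distrib_right
  by (simp add: mult.assoc sc_neg al_def b_def qint2 mult_ac sum_negf)

lemma stmt1: "- (sc (inverse (q - inverse q)) *
           (\<Sum>k\<le>n. \<Sum>l\<le>k. sc (of_nat (k choose l) * q powi (2 * int l - int k)
               * (qint q 2) powi (- int k - 2))
             * BZ1 sc q (Wm 0) (Wp 0) (int k - 2 * int l) * Gtil sc q Gt (n - k))) = F (-1) n"
  unfolding F_def Pb_flip sum_distrib_left sum_distrib_right
  by (simp add: mult.assoc sc_neg al_def BZ1_eq qint2 mult_ac sum_negf)

end

theorem proposition11p7:
  fixes sc :: "'f::field \<Rightarrow> 'a::ring_1" and q :: 'f
    and Wm Wp G Gt :: "nat \<Rightarrow> 'a" and n :: nat
  assumes "is_alg_map sc"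
    and "q \<noteq> 0" and "\<forall>m::nat. m > 0 \<longrightarrow> q ^ m \<noteq> 1"
    and "Oq_rel sc q Wm Wp G Gt"
  shows "Wm n = - (sc (inverse (q - inverse q)) *
           (\<Sum>k\<le>n. \<Sum>l\<le>k. sc (of_nat (k choose l) * q powi (int k - 2 * int l)
               * (qint q 2) powi (- int k - 2))
             * BZ0 sc q (Wm 0) (Wp 0) (int k - 2 * int l) * Gtil sc q Gt (n - k)))
     \<and> Wp n = - (sc (inverse (q - inverse q)) *
           (\<Sum>k\<le>n. \<Sum>l\<le>k. sc (of_nat (k choose l) * q powi (2 * int l - int k)
               * (qint q 2) powi (- int k - 2))
             * BZ1 sc q (Wm 0) (Wp 0) (int k - 2 * int l) * Gtil sc q Gt (n - k)))"
proof -
  interpret oq sc q Wm Wp G Gt using assms by unfold_locales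
  show ?thesis using main[of n] stmt0[of n] stmt1[of n] by simp
qed

end
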